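(* Let $p$ be a prime and $n,k$ positive integers with $(p,k-1)=1$ and $n=\mathrm{ind}_p(k)$; let $G=G(p,n,k)=\langle a,b;\ a^p=1,\ b^n=1,\ b^{-1}ab=a^k\rangle$. Then $\mathrm{P}(G)$ and $\Lambda(G)$ are complete, i.e. $\Sigma_G(R)$ and $\Sigma_G(L)$ are complete, where $R=\{k^j-1\bmod p:j\in\mathbb{Z}_n\}$ and $L=\{1-k^j\bmod p: j\in\mathbb{Z}_n\}$.
   Context: $\mathrm{ind}_p(k)$ is the least positive integer $d$ with $k^d\equiv 1\pmod p$. Elements of $G$ are written uniquely as $a^ib^j$; $k_t=k^t-1\pmod p$. Commutators are $[x,y]=x^{-1}y^{-1}xy$; $(x)\rho(g)=[x,g]$, $(x)\lambda(g)=[g,x]$; maps are written on the right and composed left to right. $\mathrm{P}(G)$, $\Lambda(G)$ are the semigroups generated by all $\rho(g)$, resp. all $\lambda(g)$; they equal $\Sigma_G(R)$ and $\Sigma_G(L)$. For $x,y\in\mathbb{Z}_p$, $(a^ib^j)\mu(x,y)=a^{xik^j-yk_j}$, $C(x,y)=\{\mu(x,yz):z\in\mathbb{Z}_p\}$. $S^*$ is the multiplicative subsemigroup of $\mathbb{Z}_p$ generated by $S$; $\Sigma_G(S)$ is the semigroup generated by $\{\mu(s,z):s\in S,z\in\mathbb{Z}_p\}$. For $x\in S^*$, $Y(x)=\{s^*z: s^*\in S^*, z\in\mathbb{Z}_p, \exists s\in S,\ x\equiv ss^*\}$; the $x$-family $\{C(x,y):y\in Y(x)\}$ is complete if it contains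 $C(x,1)$, and $\Sigma_G(S)$ is complete if all $x$-families ($x\in S^*$) are complete. *)

theory Defs
  imports "HOL-Number_Theory.Number_Theory" "HOL-Library.FuncSet"
begin

text \<open>Every element is
  uniquely a^i b^j with i in Z_p, j in Z_n; we represent a^i b^j by the pair (i,j).
  Z_p is represented by the integers {0..<p} (arithmetic reduced mod p).\<close>

definition G_carrier :: "nat \<Rightarrow> nat \<Rightarrow> (int \<times> nat) set" where
  "G_carrier p n = {0..<int p} \<times> {0..<n}"

text \<open>(a^i b^j) mu(x,y) = a^(x i k^j - y k_j), with k_j = k^j - 1 (mod p).\<close>
definition mu :: "nat \<Rightarrow> nat \<Rightarrow> nat \<Rightarrow> int \<Rightarrow> int \<Rightarrow> (int \<times> nat \<Rightarrow> int \<times> nat)" where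
  "mu p n k x y = restrict
     (\<lambda>(i, j). ((x * i * int k ^ j - y * (int k ^ j - 1)) mod int p, 0::nat))
     (G_carrier p n)"

definition Cset :: "nat \<Rightarrow> nat \<Rightarrow> nat \<Rightarrow> int \<Rightarrow> int \<Rightarrow> (int \<times> nat \<Rightarrow> int \<times> nat) set" where
  "Cset p n k x y = {mu p n k x ((y * z) mod int p) | z. z \<in> {0..<int p}}"

inductive_set semigroup_gen :: "nat \<Rightarrow> int set \<Rightarrow> int set" for p S where
  gen: "s \<in> S \<Longrightarrow> s \<in> semigroup_gen p S"
| mult: "u \<in> semigroup_gen p S \<Longrightarrow> v \<in> semigroup_gen p S \<Longrightarrow> (u * v) mod int p \<in> semigroup_gen p S"

definition Yset :: "nat \<Rightarrow> int set \<Rightarrow> int \<Rightarrow> int set" where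
  "Yset p S x = {(t * z) mod int p | t z. t \<in> semigroup_gen p S \<and> z \<in> {0..<int p}
                   \<and> (\<exists>s\<in>S. [x = s * t] (mod int p))}"

definition family_complete :: "nat \<Rightarrow> nat \<Rightarrow> nat \<Rightarrow> int set \<Rightarrow> int \<Rightarrow> bool" where
  "family_complete p n k S x \<longleftrightarrow> Cset p n k x 1 \<in> {Cset p n k x y | y. y \<in> Yset p S x}"

definition Sigma_complete :: "nat \<Rightarrow> nat \<Rightarrow> nat \<Rightarrow> int set \<Rightarrow> bool" where
  "Sigma_complete p n k S \<longleftrightarrow> (\<forall>x \<in> semigroup_gen p S. family_complete p n k S x)"

definition Rset :: "nat \<Rightarrow> nat \<Rightarrow> nat \<Rightarrow> int set" where
  "Rset p n k = {(int k ^ j - 1) mod int p | j. j < n}"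

definition Lset :: "nat \<Rightarrow> nat \<Rightarrow> nat \<Rightarrow> int set" where
  "Lset p n k = {(1 - int k ^ j) mod int p | j. j < n}"

end

theory Submission
  imports Defs
begin

lemma mult_range:
  fixes y p :: int
  assumes "coprime y p" "p > 1"
  shows "{(y * z) mod p | z. z \<in> {0..<p}} = {0..<p}"
proof
  show "{(y * z) mod p | z. z \<in> {0..<p}} \<subseteq> {0..<p}" using assms by auto
  show "{0..<p} \<subseteq> {(y * z) mod p | z. z \<in> {0..<p}}"
  proof
    fix w assume w: "w \<in> {0..<p}"
    obtain u where u: "[y * u = 1] (mod p)" using cong_solve_coprime_int[OF assms(1)] by blast
    define z where "z = (u * w) mod p"
    have "(y * z) mod p = (y * (u * w)) mod p" unfolding z_def by (simp add: mod_mult_right_eq)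
    also have "\<dots> = ((y * u) * w) mod p" by (simp add: mult.assoc)
    also have "\<dots> = (1 * w) mod p" using u unfolding cong_def by (metis mod_mult_left_eq)
    also have "\<dots> = w" using w by simp
    finally show "w \<in> {(y * z) mod p | z. z \<in> {0..<p}}" using assms(2)
      unfolding z_def by (intro CollectI exI[of _ "(u * w) mod p"]) (auto simp: z_def)
  qed
qed

lemma Cset_unit:
  assumes "coprime y (int p)" "p > 1"
  shows "Cset p n k x y = Cset p n k x 1"
proof -
  have "Cset p n k x y = (\<lambda>w. mu p n k x w) ` {(y * z) mod int p | z. z \<in> {0..<int p}}"
    unfolding Cset_def by auto
  also have "\<dots> = (\<lambda>w. mu p n k x w) ` {0..<int p}" using mult_range[of y "int p"] assms by simp
  also have "\<dots> = (\<lambda>w. mu p n k x w) ` {(1 * z) mod int p | z. z \<in> {0..<int p}}"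
    using mult_range[of 1 "int p"] assms by simp
  also have "\<dots> = Cset p n k x 1" unfolding Cset_def by auto
  finally show ?thesis .
qed

lemma decomp:
  assumes "x \<in> semigroup_gen p S" "1 \<in> semigroup_gen p S"
  shows "\<exists>s\<in>S. \<exists>t\<in>semigroup_gen p S. [x = s * t] (mod int p)"
  using assms(1)
proof (induction rule: semigroup_gen.induct)
  case (gen s)
  then show ?case using assms(2) by force
next
  case (mult u v)
  then obtain s t where st: "s \<in> S" "t \<in> semigroup_gen p S" "[u = s * t] (mod int p)" by blast
  have "(t * v) mod int p \<in> semigroup_gen p S" by (rule semigroup_gen.mult[OF st(2) mult.hyps(2)])
  moreover have "[(u * v) mod int p = s * ((t * v) mod int p)] (mod int p)"
  proof -
    have "[(u * v) mod int p = u * v] (mod int p)" by (simp add: cong_def)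
    moreover have "[u * v = (s * t) * v] (mod int p)" using st(3) by (simp add: cong_mult)
    moreover have "[(s * t) * v = s * ((t * v) mod int p)] (mod int p)"
      by (simp add: cong_def mod_mult_right_eq mult.assoc)
    ultimately show ?thesis by (meson cong_trans)
  qed
  ultimately show ?case using st(1) by blast
qed

lemma generic:
  assumes p: "prime p" and z: "0 \<in> S" and one: "1 \<in> semigroup_gen p S"
  shows "Sigma_complete p n k S"
  unfolding Sigma_complete_def family_complete_def
proof (intro ballI)
  fix x assume x: "x \<in> semigroup_gen p S"
  have p1: "p > 1" using p prime_gt_1_nat by blast
  obtain s t where st: "s \<in> S" "t \<in> semigroup_gen p S" "[x = s * t] (mod int p)"
  proof (cases "[x = 0] (mod int p)")
    case True then show ?thesis using that[of 0 1] z one by simp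
  next
    case False then show ?thesis using that decomp[OF x one] by blast
  qed
  show "Cset p n k x 1 \<in> {Cset p n k x y |y. y \<in> Yset p S x}"
  proof (cases "[t = 0] (mod int p)")
    case True
    have "[x = s * 0] (mod int p)" using st(3) True by (meson cong_mult cong_refl cong_trans)
    hence x0: "[x = 0] (mod int p)" by simp
    have "(1 * 1) mod int p \<in> Yset p S x" unfolding Yset_def using one z x0 p1
      by (intro CollectI exI[of _ 1]) auto
    hence "1 \<in> Yset p S x" using p1 by simp
    then show ?thesis by blast
  next
    case False
    have y: "(t * 1) mod int p \<in> Yset p S x" unfolding Yset_def using st p1
      by (intro CollectI exI[of _ t] exI[of _ 1]) auto
    have "\<not> int p dvd t" using False by (simp add: cong_0_iff)
    hence "coprime t (int p)" using p
      by (metis coprime_commute prime_imp_coprime prime_nat_int_transfer)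
    hence "coprime ((t * 1) mod int p) (int p)" using p1 by (simp add: coprime_mod_left_iff)
    hence "Cset p n k x ((t * 1) mod int p) = Cset p n k x 1" using Cset_unit p1 by blast
    then show ?thesis using y by (metis (mono_tags, lifting) mem_Collect_eq)
  qed
qed

lemma one_in:
  assumes p: "prime p" and r: "r \<in> S" and rp: "\<not> int p dvd r" and r0: "0 \<le> r" "r < int p"
  shows "1 \<in> semigroup_gen p S"
proof -
  have pow: "r ^ Suc m mod int p \<in> semigroup_gen p S" for m
  proof (induction m)
    case 0
    then show ?case using r r0 by (simp add: semigroup_gen.gen)
  next
    case (Suc m)
    have "(r ^ Suc m mod int p * r) mod int p \<in> semigroup_gen p S"
      by (rule semigroup_gen.mult[OF Suc semigroup_gen.gen[OF r]])
    also have "(r ^ Suc m mod int p * r) mod int p = r ^ Suc (Suc m) mod int p"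
      by (metis mod_mult_left_eq mult.commute power_Suc)
    finally show ?case .
  qed
  have p2: "p \<ge> 2" using p prime_ge_2_nat by blast
  have "\<not> p dvd nat r" using rp r0 by (metis int_dvd_int_iff nat_0_le)
  hence "[nat r ^ (p - 1) = 1] (mod p)" using fermat_theorem p by blast
  hence "[int (nat r ^ (p - 1)) = int 1] (mod int p)" using cong_int_iff by blast
  hence "[r ^ (p - 1) = 1] (mod int p)" using r0 by simp
  hence "r ^ (p - 1) mod int p = 1" using p2 unfolding cong_def by simp
  moreover have "p - 1 = Suc (p - 2)" using p2 by simp
  ultimately show ?thesis using pow[of "p - 2"] by metis
qed

theorem corollary6p2:
  fixes p n k :: nat
  assumes "prime p" and "n > 0" and "k > 0"
    and "coprime p (k - 1)"
    and "n = ord p k"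
  shows "Sigma_complete p n k (Rset p n k) \<and> Sigma_complete p n k (Lset p n k)"
proof -
  have p1: "p > 1" using assms(1) prime_gt_1_nat by blast
  have "n \<noteq> 1"
  proof
    assume "n = 1"
    hence "[k = 1] (mod p)" using assms(5) ord_eq_Suc_0_iff by simp
    hence "p dvd k - 1" using assms(3) by (simp add: cong_altdef_nat)
    thus False using assms(4) p1 by (simp add: coprime_absorb_left)
  qed
  hence n1: "1 < n" using assms(2) by simp
  have ndvd: "\<not> int p dvd (int k - 1)"
  proof
    assume "int p dvd (int k - 1)"
    hence "int p dvd int (k - 1)" using assms(3) by (simp add: of_nat_diff)
    hence "p dvd k - 1" by simp
    thus False using assms(4) p1 by (simp add: coprime_absorb_left)
  qed
  have R: "Sigma_complete p n k (Rset p n k)"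
  proof (rule generic[OF assms(1)])
    show "0 \<in> Rset p n k" unfolding Rset_def using assms(2) by (intro CollectI exI[of _ 0]) simp
    show "1 \<in> semigroup_gen p (Rset p n k)"
    proof (rule one_in[OF assms(1), of "(int k ^ 1 - 1) mod int p"])
      show "(int k ^ 1 - 1) mod int p \<in> Rset p n k" unfolding Rset_def using n1 by blast
      show "\<not> int p dvd (int k ^ 1 - 1) mod int p" using ndvd by (simp add: dvd_mod_iff)
      show "0 \<le> (int k ^ 1 - 1) mod int p" "(int k ^ 1 - 1) mod int p < int p" using p1 by auto
    qed
  qed
  have L: "Sigma_complete p n k (Lset p n k)"
  proof (rule generic[OF assms(1)])
    show "0 \<in> Lset p n k" unfolding Lset_def using assms(2) by (intro CollectI exI[of _ 0]) simp
    show "1 \<in> semigroup_gen p (Lset p n k)"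
    proof (rule one_in[OF assms(1), of "(1 - int k ^ 1) mod int p"])
      show "(1 - int k ^ 1) mod int p \<in> Lset p n k" unfolding Lset_def using n1 by blast
      have "\<not> int p dvd (1 - int k)" using ndvd by (metis dvd_minus_iff minus_diff_eq)
      thus "\<not> int p dvd (1 - int k ^ 1) mod int p" by (simp add: dvd_mod_iff)
      show "0 \<le> (1 - int k ^ 1) mod int p" "(1 - int k ^ 1) mod int p < int p" using p1 by auto
    qed
  qed
  show ?thesis using R L by blast
qed

end
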